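(* Let $X$ be a real reflexive Banach space and $f:X\to\mathbb{R}\cup\{+\infty\}$ a lower semicontinuous proper convex function, and let $T=\partial f$. Then for every $\epsilon\ge0$ and $x\in X$, $\breve{T}_{\mathcal{F}_{\partial f}}(\tfrac{\epsilon}{2},x)\subset T^{\mathrm{SE}}(\epsilon,x)$.
   Context: $X^{\ast}$ is the dual of $X$ with pairing $\langle\cdot,\cdot\rangle$; $\partial f$ is the convex subdifferential of $f$. The dual of $X\times X^{\ast}$ is identified with $X^{\ast}\times X$ via $\langle (x,x^{\ast}),(y^{\ast},y)\rangle=\langle x,y^{\ast}\rangle+\langle y,x^{\ast}\rangle$; for $g:X\times X^{\ast}\to\mathbb{R}\cup\{+\infty\}$, $g^{\ast}(y^{\ast},y)=\sup_{(x,x^{\ast})}\{\langle x,y^{\ast}\rangle+\langle y,x^{\ast}\rangle-g(x,x^{\ast})\}$. The Fitzpatrick function of $T$ is $\mathcal{F}_T(x,x^{\ast})=\sup\{\langle y,x^{\ast}\rangle+\langle x-y,y^{\ast}\rangle:(y,y^{\ast})\in\mathrm{gph}(T)\}$. For $\eta\ge0$, $\partial_\eta g(z)$ is the set of $(y^{\ast},y)\in X^{\ast}\times X$ with $g(w,w^{\ast})\ge g(z)+\langle (w,w^{\ast})-z,(y^{\ast},y)\rangle-\eta$ for all $(w,w^{\ast})$ when $g(z)<\infty$, and $\emptyset$ otherwise; $\breve{T}_g(\epsilon,x):=\{x^{\ast}:(x^{\ast},x)\in\partial_{2\epsilon}g(x,x^{\ast})\}$. The smallest enlargement of $T$ is $T^{\mathrm{SE}}(\epsilon,x):=\{x^{\ast}:\mathcal{F}_T^{\ast}(x^{\ast},x)\le\langle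 x,x^{\ast}\rangle+\epsilon\}$. *)

theory Defs
  imports "HOL-Analysis.Analysis" "HOL-Library.Extended_Real"
begin

definition pair :: "'a::real_normed_vector \<Rightarrow> ('a \<Rightarrow>\<^sub>L real) \<Rightarrow> real" where
  "pair x xs = blinfun_apply xs x"

definition reflexive_space :: "'a::real_normed_vector itself \<Rightarrow> bool" where
  "reflexive_space _ \<longleftrightarrow>
     (\<forall>\<phi> :: ('a \<Rightarrow>\<^sub>L real) \<Rightarrow>\<^sub>L real. \<exists>x::'a. \<forall>xs. blinfun_apply \<phi> xs = blinfun_apply xs x)"

(* Functions X \<rightarrow> \<real> \<union> {+\<infinity>} are modelled as ereal-valued functions never equal to -\<infinity>. *)
definition proper_fun :: "('a \<Rightarrow> ereal) \<Rightarrow> bool" where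
  "proper_fun f \<longleftrightarrow> (\<forall>x. f x \<noteq> -\<infinity>) \<and> (\<exists>x. f x \<noteq> \<infinity>)"

definition convex_fun :: "('a::real_vector \<Rightarrow> ereal) \<Rightarrow> bool" where
  "convex_fun f \<longleftrightarrow>
     (\<forall>x y t. 0 \<le> t \<and> t \<le> 1 \<longrightarrow>
        f (t *\<^sub>R x + (1 - t) *\<^sub>R y) \<le> ereal t * f x + ereal (1 - t) * f y)"

definition lsc_fun :: "('a::topological_space \<Rightarrow> ereal) \<Rightarrow> bool" where
  "lsc_fun f \<longleftrightarrow> (\<forall>c. closed {x. f x \<le> c})"

definition subdiff :: "('a::real_normed_vector \<Rightarrow> ereal) \<Rightarrow> 'a \<Rightarrow> ('a \<Rightarrow>\<^sub>L real) set" where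
  "subdiff f x = {xs. f x < \<infinity> \<and> (\<forall>y. f y \<ge> f x + ereal (pair (y - x) xs))}"

definition fitzpatrick ::
  "('a::real_normed_vector \<Rightarrow> ('a \<Rightarrow>\<^sub>L real) set) \<Rightarrow> 'a \<times> ('a \<Rightarrow>\<^sub>L real) \<Rightarrow> ereal" where
  "fitzpatrick T z = (case z of (x, xs) \<Rightarrow>
     (SUP p \<in> {(y, ys). ys \<in> T y}. ereal (pair (fst p) xs + pair (x - fst p) (snd p))))"

(* Conjugate of g : X \<times> X* \<rightarrow> \<real>\<union>{\<infinity>}, defined on X* \<times> X (dual of X \<times> X* via reflexivity). *)
definition conj_pair ::
  "('a::real_normed_vector \<times> ('a \<Rightarrow>\<^sub>L real) \<Rightarrow> ereal) \<Rightarrow> ('a \<Rightarrow>\<^sub>L real) \<times> 'a \<Rightarrow> ereal" where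
  "conj_pair g w = (case w of (ys, y) \<Rightarrow>
     (SUP p \<in> UNIV. ereal (pair (fst p) ys + pair y (snd p)) - g p))"

definition pair2 :: "'a::real_normed_vector \<times> ('a \<Rightarrow>\<^sub>L real) \<Rightarrow> ('a \<Rightarrow>\<^sub>L real) \<times> 'a \<Rightarrow> real" where
  "pair2 z w = pair (fst z) (fst w) + pair (snd w) (snd z)"

definition eps_subdiff ::
  "real \<Rightarrow> ('a::real_normed_vector \<times> ('a \<Rightarrow>\<^sub>L real) \<Rightarrow> ereal) \<Rightarrow> 'a \<times> ('a \<Rightarrow>\<^sub>L real)
     \<Rightarrow> (('a \<Rightarrow>\<^sub>L real) \<times> 'a) set" where
  "eps_subdiff \<eta> g z =
     (if g z < \<infinity> then {w. \<forall>v. g v \<ge> g z + ereal (pair2 (v - z) w) - ereal \<eta>} else {})"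

definition breve_T ::
  "('a::real_normed_vector \<times> ('a \<Rightarrow>\<^sub>L real) \<Rightarrow> ereal) \<Rightarrow> real \<Rightarrow> 'a \<Rightarrow> ('a \<Rightarrow>\<^sub>L real) set" where
  "breve_T g \<epsilon> x = {xs. (xs, x) \<in> eps_subdiff (2 * \<epsilon>) g (x, xs)}"

definition smallest_enl ::
  "('a::real_normed_vector \<Rightarrow> ('a \<Rightarrow>\<^sub>L real) set) \<Rightarrow> real \<Rightarrow> 'a \<Rightarrow> ('a \<Rightarrow>\<^sub>L real) set" where
  "smallest_enl T \<epsilon> x = {xs. conj_pair (fitzpatrick T) (xs, x) \<le> ereal (pair x xs + \<epsilon>)}"

end

theory Submission
  imports Defs
begin



definition good :: "('a::real_vector \<Rightarrow> real) \<Rightarrow> ('a \<times> real) set \<Rightarrow> bool" where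
 "good p G \<longleftrightarrow> (\<forall>x a y b. (x,a)\<in>G \<longrightarrow> (y,b)\<in>G \<longrightarrow> (x+y, a+b) \<in> G) \<and>
   (\<forall>x a r. (x,a)\<in>G \<longrightarrow> (r *\<^sub>R x, r*a) \<in> G) \<and>
   (\<forall>x a b. (x,a)\<in>G \<longrightarrow> (x,b)\<in>G \<longrightarrow> a=b) \<and> (\<forall>x a. (x,a)\<in>G \<longrightarrow> a \<le> p x)"

definition cvxr :: "('a::real_vector \<Rightarrow> real) \<Rightarrow> bool" where
 "cvxr p \<longleftrightarrow> (\<forall>x y t. 0 \<le> t \<longrightarrow> t \<le> 1 \<longrightarrow> p (t *\<^sub>R x + (1-t) *\<^sub>R y) \<le> t * p x + (1-t) * p y)"

lemma goodD:
  assumes "good p G"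
  shows good_add: "\<And>x a y b. (x,a)\<in>G \<Longrightarrow> (y,b)\<in>G \<Longrightarrow> (x+y, a+b) \<in> G"
    and good_sc: "\<And>x a r. (x,a)\<in>G \<Longrightarrow> (r *\<^sub>R x, r*a) \<in> G"
    and good_fun: "\<And>x a b. (x,a)\<in>G \<Longrightarrow> (x,b)\<in>G \<Longrightarrow> a=b"
    and good_le: "\<And>x a. (x,a)\<in>G \<Longrightarrow> a \<le> p x"
  using assms unfolding good_def by blast+


lemma good_union_chain:
  assumes "C \<in> chains {G. good p G}"
  shows "good p (\<Union>C)"
proof -
  have sub: "\<And>G. G \<in> C \<Longrightarrow> good p G" and ch: "\<And>A B. A\<in>C \<Longrightarrow> B\<in>C \<Longrightarrow> A \<subseteq> B \<or> B \<subseteq> A"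
    using assms unfolding chains_def chain_subset_def by auto
  show ?thesis unfolding good_def
  proof (intro conjI allI impI)
    fix x a y b assume "(x,a) \<in> \<Union>C" "(y,b) \<in> \<Union>C"
    then obtain A B where A: "A\<in>C" "(x,a)\<in>A" and B: "B\<in>C" "(y,b)\<in>B" by auto
    from ch[OF A(1) B(1)] show "(x+y,a+b) \<in> \<Union>C"
    proof
      assume "A \<subseteq> B" thus ?thesis using sub[OF B(1)] A B good_add by blast
    next
      assume "B \<subseteq> A" thus ?thesis using sub[OF A(1)] A B good_add by blast
    qed
  next
    fix x a r assume "(x,a) \<in> \<Union>C"
    then obtain A where A: "A\<in>C" "(x,a)\<in>A" by auto
    thus "(r *\<^sub>R x, r*a) \<in> \<Union>C" using sub[OF A(1)] good_sc by blast
  next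
    fix x a b assume "(x,a) \<in> \<Union>C" "(x,b) \<in> \<Union>C"
    then obtain A B where A: "A\<in>C" "(x,a)\<in>A" and B: "B\<in>C" "(x,b)\<in>B" by auto
    from ch[OF A(1) B(1)] show "a = b"
    proof
      assume "A \<subseteq> B" thus ?thesis using sub[OF B(1)] A B good_fun by blast
    next
      assume "B \<subseteq> A" thus ?thesis using sub[OF A(1)] A B good_fun by blast
    qed
  next
    fix x a assume "(x,a) \<in> \<Union>C"
    then obtain A where A: "A\<in>C" "(x,a)\<in>A" by auto
    thus "a \<le> p x" using sub[OF A(1)] good_le by blast
  qed
qed


lemma key_ineq:
  assumes p: "cvxr p" and G: "good p G" and xa: "(x,a)\<in>G" and xa': "(x',a')\<in>G"
    and t: "t > 0" and t': "t' > 0"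
  shows "(a' - p (x' - t' *\<^sub>R v)) / t' \<le> (p (x + t *\<^sub>R v) - a) / t"
proof -
  define s where "s = t + t'"
  have s: "s > 0" using t t' s_def by simp
  define \<alpha> where "\<alpha> = t / s"
  have a01: "0 \<le> \<alpha>" "\<alpha> \<le> 1" using t t' s unfolding \<alpha>_def s_def by auto
  have 1: "1 - \<alpha> = t' / s" using s unfolding \<alpha>_def s_def by (simp add: field_simps)
  have "(\<alpha> *\<^sub>R x' + (1-\<alpha>) *\<^sub>R x, \<alpha> * a' + (1-\<alpha>) * a) \<in> G"
    using good_add[OF G] good_sc[OF G] xa xa' by blast
  hence le1: "\<alpha> * a' + (1-\<alpha>) * a \<le> p (\<alpha> *\<^sub>R x' + (1-\<alpha>) *\<^sub>R x)" using good_le[OF G] by blast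
  have eqv: "\<alpha> *\<^sub>R (x' - t' *\<^sub>R v) + (1-\<alpha>) *\<^sub>R (x + t *\<^sub>R v) = \<alpha> *\<^sub>R x' + (1-\<alpha>) *\<^sub>R x"
  proof -
    have "\<alpha> * t' = (1-\<alpha>) * t" unfolding 1 \<alpha>_def using s by (simp add: field_simps s_def)
    hence "(\<alpha> * t') *\<^sub>R v = ((1-\<alpha>) * t) *\<^sub>R v" by simp
    thus ?thesis by (simp add: algebra_simps)
  qed
  have le2: "p (\<alpha> *\<^sub>R x' + (1-\<alpha>) *\<^sub>R x) \<le> \<alpha> * p (x' - t' *\<^sub>R v) + (1-\<alpha>) * p (x + t *\<^sub>R v)"
    using p a01 unfolding cvxr_def eqv[symmetric] by blast
  have "\<alpha> * a' + (1-\<alpha>) * a \<le> \<alpha> * p (x' - t' *\<^sub>R v) + (1-\<alpha>) * p (x + t *\<^sub>R v)"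
    using le1 le2 by linarith
  hence "s * (\<alpha> * a' + (1-\<alpha>) * a) \<le> s * (\<alpha> * p (x' - t' *\<^sub>R v) + (1-\<alpha>) * p (x + t *\<^sub>R v))"
    using s by (intro mult_left_mono) auto
  moreover have "s * \<alpha> = t" using s unfolding \<alpha>_def by simp
  moreover have "s * (1-\<alpha>) = t'" unfolding 1 using s by simp
  ultimately have "t * a' + t' * a \<le> t * p (x' - t' *\<^sub>R v) + t' * p (x + t *\<^sub>R v)"
    by (simp add: distrib_left mult.assoc[symmetric])
  thus ?thesis using t t' by (simp add: field_simps)
qed


lemma good_extend:
  assumes p: "cvxr p" and G: "good p G" and z: "(0,0) \<in> G" and v: "v \<notin> fst ` G"
  shows "\<exists>c. good p {(x + t *\<^sub>R v, a + t*c) | x a t. (x,a)\<in>G}"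
proof -
  define Lo where "Lo = {(a - p (x - t *\<^sub>R v)) / t | x a t. (x,a)\<in>G \<and> t > 0}"
  define Up where "Up = {(p (x + t *\<^sub>R v) - a) / t | x a t. (x,a)\<in>G \<and> t > 0}"
  have LU: "\<And>l u. l \<in> Lo \<Longrightarrow> u \<in> Up \<Longrightarrow> l \<le> u"
  proof -
    fix l u assume "l \<in> Lo" "u \<in> Up"
    then obtain x a t x' a' t' where "(x',a')\<in>G" "t' > 0" "l = (a' - p (x' - t' *\<^sub>R v)) / t'"
      "(x,a)\<in>G" "t > 0" "u = (p (x + t *\<^sub>R v) - a) / t" unfolding Lo_def Up_def by blast
    thus "l \<le> u" using key_ineq[OF p G] by simp
  qed
  have "(0 - p (0 - 1 *\<^sub>R v)) / 1 \<in> Lo" unfolding Lo_def by (intro CollectI exI[of _ "0::'a"] exI[of _ "0::real"] exI[of _ "1::real"]) (simp add: z)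
  hence Lne: "Lo \<noteq> {}" by blast
  have Une: "(p (0 + 1 *\<^sub>R v) - 0) / 1 \<in> Up" unfolding Up_def by (intro CollectI exI[of _ "0::'a"] exI[of _ "0::real"] exI[of _ "1::real"]) (simp add: z)
  define c where "c = Sup Lo"
  have bdd: "bdd_above Lo" using LU Une unfolding bdd_above_def by blast
  have cL: "\<And>l. l \<in> Lo \<Longrightarrow> l \<le> c" unfolding c_def using cSup_upper bdd by blast
  have cU: "\<And>u. u \<in> Up \<Longrightarrow> c \<le> u" unfolding c_def using cSup_least Lne LU by blast
  let ?E = "{(x + t *\<^sub>R v, a + t*c) | x a t. (x,a)\<in>G}"
  have Gadd: "\<And>x a y b. (x,a)\<in>G \<Longrightarrow> (y,b)\<in>G \<Longrightarrow> (x+y,a+b)\<in>G"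
   and Gsc: "\<And>x a r. (x,a)\<in>G \<Longrightarrow> (r *\<^sub>R x, r*a)\<in>G"
   and Gfun: "\<And>x a b. (x,a)\<in>G \<Longrightarrow> (x,b)\<in>G \<Longrightarrow> a = b"
   and Gp: "\<And>x a. (x,a)\<in>G \<Longrightarrow> a \<le> p x" using goodD[OF G] by blast+
  have "good p ?E" unfolding good_def
  proof (intro conjI allI impI)
    fix x a y b assume "(x,a) \<in> ?E" "(y,b) \<in> ?E"
    then obtain x1 a1 t1 x2 a2 t2 where 1: "(x1,a1)\<in>G" "x = x1 + t1 *\<^sub>R v" "a = a1 + t1 * c"
      and 2: "(x2,a2)\<in>G" "y = x2 + t2 *\<^sub>R v" "b = a2 + t2 * c" by blast
    have "(x1+x2, a1+a2) \<in> G" using Gadd 1 2 by blast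
    moreover have "x + y = (x1+x2) + (t1+t2) *\<^sub>R v" "a + b = (a1+a2) + (t1+t2)*c"
      using 1 2 by (simp_all add: algebra_simps)
    ultimately show "(x+y,a+b) \<in> ?E" by (intro CollectI exI[of _ "x1+x2"] exI[of _ "a1+a2"] exI[of _ "t1+t2"]) simp
  next
    fix x a r assume "(x,a) \<in> ?E"
    then obtain x1 a1 t1 where 1: "(x1,a1)\<in>G" "x = x1 + t1 *\<^sub>R v" "a = a1 + t1 * c" by blast
    have "(r *\<^sub>R x1, r*a1) \<in> G" using Gsc 1 by blast
    moreover have "r *\<^sub>R x = r *\<^sub>R x1 + (r*t1) *\<^sub>R v" "r * a = r*a1 + (r*t1)*c"
      using 1 by (simp_all add: algebra_simps)
    ultimately show "(r *\<^sub>R x, r*a) \<in> ?E" by (intro CollectI exI[of _ "r *\<^sub>R x1"] exI[of _ "r*a1"] exI[of _ "r*t1"]) simp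
  next
    fix x a b assume "(x,a) \<in> ?E" "(x,b) \<in> ?E"
    then obtain x1 a1 t1 x2 a2 t2 where 1: "(x1,a1)\<in>G" "x = x1 + t1 *\<^sub>R v" "a = a1 + t1 * c"
      and 2: "(x2,a2)\<in>G" "x = x2 + t2 *\<^sub>R v" "b = a2 + t2 * c" by blast
    have t12: "t1 = t2"
    proof (rule ccontr)
      assume ne: "t1 \<noteq> t2"
      have "(x2 + (-1) *\<^sub>R x1, a2 + (-1)*a1) \<in> G" using Gadd Gsc 1 2 by blast
      hence "((1/(t1-t2)) *\<^sub>R (x2 + (-1) *\<^sub>R x1), (1/(t1-t2))*(a2 + (-1)*a1)) \<in> G" using Gsc by blast
      moreover have "(1/(t1-t2)) *\<^sub>R (x2 + (-1) *\<^sub>R x1) = v"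
      proof -
        have "x2 - x1 = (t1 - t2) *\<^sub>R v" using 1(2) 2(2) by (simp add: algebra_simps)
        thus ?thesis using ne by simp
      qed
      ultimately have "v \<in> fst ` G" by force
      thus False using v by blast
    qed
    hence "x1 = x2" using 1 2 by simp
    hence "a1 = a2" using Gfun 1 2 by blast
    thus "a = b" using 1 2 t12 by simp
  next
    fix x a assume "(x,a) \<in> ?E"
    then obtain x1 a1 t where 1: "(x1,a1)\<in>G" "x = x1 + t *\<^sub>R v" "a = a1 + t * c" by blast
    consider "t > 0" | "t = 0" | "t < 0" by linarith
    thus "a \<le> p x"
    proof cases
      case 1
      have "(p (x1 + t *\<^sub>R v) - a1) / t \<in> Up" unfolding Up_def using \<open>(x1,a1)\<in>G\<close> 1 by (intro CollectI exI[of _ x1] exI[of _ a1] exI[of _ t]) simp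
      hence "c \<le> (p (x1 + t *\<^sub>R v) - a1) / t" by (rule cU)
      hence "t * c \<le> p (x1 + t *\<^sub>R v) - a1" using 1 by (simp add: field_simps)
      thus ?thesis using \<open>x = _\<close> \<open>a = _\<close> by simp
    next
      case 2 thus ?thesis using Gp 1 by simp
    next
      case 3
      have "(a1 - p (x1 - (-t) *\<^sub>R v)) / (-t) \<in> Lo" unfolding Lo_def using \<open>(x1,a1)\<in>G\<close> 3 by (intro CollectI exI[of _ x1] exI[of _ a1] exI[of _ "-t"]) simp
      hence "(a1 - p (x1 - (-t) *\<^sub>R v)) / (-t) \<le> c" by (rule cL)
      hence "a1 - p (x1 - (-t) *\<^sub>R v) \<le> (-t) * c" using 3 by (simp add: field_simps)
      thus ?thesis using \<open>x = _\<close> \<open>a = _\<close> by simp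
    qed
  qed
  thus ?thesis by blast
qed


lemma hahn_banach_cvx:
  fixes p :: "'a::real_vector \<Rightarrow> real"
  assumes p: "cvxr p" and p0: "p 0 \<ge> 0"
  shows "\<exists>L. (\<forall>x y. L (x+y) = L x + L y) \<and> (\<forall>r x. L (r *\<^sub>R x) = r * L x) \<and> (\<forall>x. L x \<le> p x)"
proof -
  have "\<forall>C\<in>chains {G. good p G}. \<Union>C \<in> {G. good p G}" using good_union_chain by blast
  then obtain M where M: "good p M" and max: "\<And>X. good p X \<Longrightarrow> M \<subseteq> X \<Longrightarrow> X = M"
    using Zorn_Lemma[of "{G. good p G}"] by blast
  have Madd: "\<And>x a y b. (x,a)\<in>M \<Longrightarrow> (y,b)\<in>M \<Longrightarrow> (x+y,a+b)\<in>M"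
   and Msc: "\<And>x a r. (x,a)\<in>M \<Longrightarrow> (r *\<^sub>R x, r*a)\<in>M"
   and Mfun: "\<And>x a b. (x,a)\<in>M \<Longrightarrow> (x,b)\<in>M \<Longrightarrow> a = b"
   and Mp: "\<And>x a. (x,a)\<in>M \<Longrightarrow> a \<le> p x" using goodD[OF M] by blast+
  have g0: "good p {(0,0)}" using p0 unfolding good_def by auto
  have "M \<noteq> {}"
  proof
    assume "M = {}"
    hence "{(0,0)} = M" using max[OF g0] by blast
    thus False using \<open>M = {}\<close> by blast
  qed
  then obtain x0 a0 where "(x0,a0) \<in> M" by auto
  hence z: "(0,0) \<in> M" using Msc[of x0 a0 0] by simp
  have dom: "\<And>v. v \<in> fst ` M"
  proof (rule ccontr)
    fix v assume v: "v \<notin> fst ` M"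
    obtain c where gE: "good p {(x + t *\<^sub>R v, a + t*c) | x a t. (x,a)\<in>M}"
      using good_extend[OF p M z v] by blast
    have "M \<subseteq> {(x + t *\<^sub>R v, a + t*c) | x a t. (x,a)\<in>M}"
    proof
      fix w assume "w \<in> M"
      then obtain x a where "w = (x,a)" "(x,a)\<in>M" by (cases w) auto
      thus "w \<in> {(x + t *\<^sub>R v, a + t*c) | x a t. (x,a)\<in>M}"
        by (intro CollectI exI[of _ x] exI[of _ a] exI[of _ 0]) simp
    qed
    hence eq: "{(x + t *\<^sub>R v, a + t*c) | x a t. (x,a)\<in>M} = M" using max gE by blast
    have "(v, c) \<in> {(x + t *\<^sub>R v, a + t*c) | x a t. (x,a)\<in>M}"
      using z by (intro CollectI exI[of _ 0] exI[of _ "0::real"] exI[of _ 1]) simp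
    hence "(v,c) \<in> M" using eq by (metis (no_types, lifting))
    thus False using v by force
  qed
  define L where "L x = (THE a. (x,a) \<in> M)" for x
  have LM: "\<And>x. (x, L x) \<in> M"
  proof -
    fix x
    obtain a where a: "(x,a) \<in> M" using dom[of x] by force
    have "L x = a" unfolding L_def using a Mfun by blast
    thus "(x, L x) \<in> M" using a by simp
  qed
  have Lval: "\<And>x a. (x,a) \<in> M \<Longrightarrow> L x = a" using LM Mfun by blast
  show ?thesis
  proof (intro exI[of _ L] conjI allI)
    fix x y show "L (x+y) = L x + L y" using Lval Madd LM by blast
  next
    fix r x show "L (r *\<^sub>R x) = r * L x" using Lval Msc LM by blast
  next
    fix x show "L x \<le> p x" using Mp LM by blast
  qed
qed




definition cvx :: "('a::real_vector \<Rightarrow> ereal) \<Rightarrow> bool" where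
 "cvx h \<longleftrightarrow> (\<forall>u. h u \<noteq> -\<infinity>) \<and> (\<forall>a b t. 0 \<le> t \<longrightarrow> t \<le> 1 \<longrightarrow> h a \<noteq> \<infinity> \<longrightarrow> h b \<noteq> \<infinity> \<longrightarrow>
     h (t *\<^sub>R a + (1-t) *\<^sub>R b) \<le> ereal (t * real_of_ereal (h a) + (1-t) * real_of_ereal (h b)))"

lemma cvx_fin: "cvx h \<Longrightarrow> h w \<noteq> \<infinity> \<Longrightarrow> h w = ereal (real_of_ereal (h w))"
  unfolding cvx_def by (cases "h w") auto

lemma cvxD: "cvx h \<Longrightarrow> 0 \<le> t \<Longrightarrow> t \<le> 1 \<Longrightarrow> h a \<noteq> \<infinity> \<Longrightarrow> h b \<noteq> \<infinity> \<Longrightarrow>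
     h (t *\<^sub>R a + (1-t) *\<^sub>R b) \<le> ereal (t * real_of_ereal (h a) + (1-t) * real_of_ereal (h b))"
  unfolding cvx_def by blast

lemma norm_cvx_comb:
  fixes a b q :: "'a::real_normed_vector"
  assumes "0 \<le> t" "t \<le> 1"
  shows "norm (t *\<^sub>R a + (1-t) *\<^sub>R b - q) \<le> t * norm (a - q) + (1-t) * norm (b - q)"
proof -
  have "t *\<^sub>R a + (1-t) *\<^sub>R b - q = t *\<^sub>R (a - q) + (1-t) *\<^sub>R (b - q)" by (simp add: algebra_simps)
  also have "norm \<dots> \<le> norm (t *\<^sub>R (a - q)) + norm ((1-t) *\<^sub>R (b - q))" by (rule norm_triangle_ineq)
  also have "\<dots> = t * norm (a - q) + (1-t) * norm (b - q)" using assms by simp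
  finally show ?thesis .
qed

lemma sandwich:
  fixes h :: "'a::real_normed_vector \<Rightarrow> ereal"
  assumes cv: "cvx h" and y1: "h y1 \<noteq> \<infinity>" and m: "m \<ge> 0"
   and low: "\<And>u. ereal (c - m * norm (u - q)) \<le> h u"
  shows "\<exists>L::'a \<Rightarrow>\<^sub>L real. \<exists>\<beta>. (\<forall>u. ereal (blinfun_apply L u + \<beta>) \<le> h u) \<and>
            (\<forall>u. c - m * norm (u - q) \<le> blinfun_apply L u + \<beta>)"
proof -
  define \<psi> where "\<psi> u = c - m * norm (u - q)" for u
  define hr where "hr u = real_of_ereal (h u)" for u
  have fin: "\<And>w. h w \<noteq> \<infinity> \<Longrightarrow> h w = ereal (hr w)" unfolding hr_def using cvx_fin[OF cv] by blast
  have hge: "\<And>w. h w \<noteq> \<infinity> \<Longrightarrow> \<psi> w \<le> hr w"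
  proof -
    fix w assume "h w \<noteq> \<infinity>"
    hence "ereal (\<psi> w) \<le> ereal (hr w)" using low[of w] fin[of w] unfolding \<psi>_def by simp
    thus "\<psi> w \<le> hr w" by simp
  qed
  define K where "K z = {hr (z+u) - \<psi> u | u. h (z+u) \<noteq> \<infinity>}" for z
  define kr where "kr z = Inf (K z)" for z
  have Kne: "\<And>z. K z \<noteq> {}"
  proof -
    fix z have "hr (z + (y1 - z)) - \<psi> (y1 - z) \<in> K z" unfolding K_def using y1 by (intro CollectI exI[of _ "y1 - z"]) simp
    thus "K z \<noteq> {}" by blast
  qed
  have Klow: "\<And>z k. k \<in> K z \<Longrightarrow> - m * norm z \<le> k"
  proof -
    fix z k assume "k \<in> K z"
    then obtain u where u: "h (z+u) \<noteq> \<infinity>" "k = hr (z+u) - \<psi> u" unfolding K_def by blast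
    have "norm (z + u - q) \<le> norm z + norm (u - q)"
      using norm_triangle_ineq[of z "u - q"] by (simp add: algebra_simps)
    hence "m * norm (z + u - q) \<le> m * (norm z + norm (u - q))" using m by (rule mult_left_mono)
    hence "\<psi> (z+u) - \<psi> u \<ge> - m * norm z" unfolding \<psi>_def by (simp add: algebra_simps)
    thus "- m * norm z \<le> k" using hge[OF u(1)] u(2) by linarith
  qed
  have Kbdd: "\<And>z. bdd_below (K z)" unfolding bdd_below_def using Klow by blast
  have kle: "\<And>z u. h (z+u) \<noteq> \<infinity> \<Longrightarrow> kr z \<le> hr (z+u) - \<psi> u"
  proof -
    fix z u assume "h (z+u) \<noteq> \<infinity>"
    hence "hr (z+u) - \<psi> u \<in> K z" unfolding K_def by blast
    thus "kr z \<le> hr (z+u) - \<psi> u" unfolding kr_def using Kbdd by (rule cInf_lower)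
  qed
  define B where "B = hr y1 - c + m * norm (y1 - q)"
  have kup: "\<And>z. kr z \<le> B + m * norm z"
  proof -
    fix z
    have "kr z \<le> hr (z + (y1 - z)) - \<psi> (y1 - z)" using kle[of z "y1 - z"] y1 by simp
    moreover have "norm (y1 - z - q) \<le> norm (y1 - q) + norm z"
      using norm_triangle_ineq4[of "y1 - q" z] by (simp add: algebra_simps)
    hence "m * norm (y1 - z - q) \<le> m * (norm (y1 - q) + norm z)" using m by (rule mult_left_mono)
    ultimately show "kr z \<le> B + m * norm z" unfolding B_def \<psi>_def by (simp add: algebra_simps)
  qed
  have k0: "kr 0 \<ge> 0"
    unfolding kr_def
  proof (rule cInf_greatest[OF Kne])
    fix k assume "k \<in> K 0"
    then obtain u where u: "h u \<noteq> \<infinity>" "k = hr u - \<psi> u" unfolding K_def by auto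
    thus "0 \<le> k" using hge[OF u(1)] by simp
  qed
  have kcv: "cvxr kr" unfolding cvxr_def
  proof (intro allI impI)
    fix z1 z2 :: 'a and t :: real assume t: "0 \<le> t" "t \<le> 1"
    let ?w = "t *\<^sub>R z1 + (1-t) *\<^sub>R z2"
    show "kr ?w \<le> t * kr z1 + (1-t) * kr z2"
    proof (rule field_le_epsilon)
      fix e :: real assume e: "e > 0"
      obtain k1 where k1: "k1 \<in> K z1" "k1 < kr z1 + e"
        using cInf_lessD[OF Kne[of z1], of "kr z1 + e"] e unfolding kr_def by auto
      then obtain u1 where u1: "h (z1+u1) \<noteq> \<infinity>" "k1 = hr (z1+u1) - \<psi> u1" unfolding K_def by blast
      obtain k2 where k2: "k2 \<in> K z2" "k2 < kr z2 + e"
        using cInf_lessD[OF Kne[of z2], of "kr z2 + e"] e unfolding kr_def by auto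
      then obtain u2 where u2: "h (z2+u2) \<noteq> \<infinity>" "k2 = hr (z2+u2) - \<psi> u2" unfolding K_def by blast
      define u where "u = t *\<^sub>R u1 + (1-t) *\<^sub>R u2"
      have wu: "?w + u = t *\<^sub>R (z1+u1) + (1-t) *\<^sub>R (z2+u2)" unfolding u_def by (simp add: algebra_simps)
      have hle: "h (?w + u) \<le> ereal (t * hr (z1+u1) + (1-t) * hr (z2+u2))"
        unfolding wu hr_def using cvxD[OF cv t u1(1) u2(1)] .
      hence hfin: "h (?w + u) \<noteq> \<infinity>" by auto
      have hrle: "hr (?w + u) \<le> t * hr (z1+u1) + (1-t) * hr (z2+u2)"
        using hle fin[OF hfin] by simp
      have "norm (u - q) \<le> t * norm (u1 - q) + (1-t) * norm (u2 - q)"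
        unfolding u_def using norm_cvx_comb[OF t] .
      hence "m * norm (u - q) \<le> m * (t * norm (u1 - q) + (1-t) * norm (u2 - q))" using m by (rule mult_left_mono)
      hence psi: "\<psi> u \<ge> t * \<psi> u1 + (1-t) * \<psi> u2" unfolding \<psi>_def by (simp add: algebra_simps)
      have "kr ?w \<le> hr (?w + u) - \<psi> u" using kle[OF hfin] .
      also have "\<dots> \<le> t * (hr (z1+u1) - \<psi> u1) + (1-t) * (hr (z2+u2) - \<psi> u2)"
        using hrle psi by (simp add: algebra_simps)
      also have "\<dots> \<le> t * (kr z1 + e) + (1-t) * (kr z2 + e)"
        using k1 k2 u1 u2 t by (intro add_mono mult_left_mono) auto
      also have "\<dots> = t * kr z1 + (1-t) * kr z2 + e" by (simp add: algebra_simps)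
      finally show "kr ?w \<le> t * kr z1 + (1-t) * kr z2 + e" .
    qed
  qed
  define p where "p z = kr z - kr 0" for z
  have pcv: "cvxr p" using kcv unfolding cvxr_def p_def by (simp add: algebra_simps)
  obtain L0 where Ladd: "\<And>x y. L0 (x+y) = L0 x + L0 y" and Lsc: "\<And>r x. L0 (r *\<^sub>R x) = r * L0 x"
    and Lp: "\<And>x. L0 x \<le> p x"
    using hahn_banach_cvx[OF pcv] unfolding p_def by auto
  define K0 where "K0 = B + m - kr 0"
  have Lb1: "\<And>w. norm w = 1 \<Longrightarrow> \<bar>L0 w\<bar> \<le> K0"
  proof -
    fix w :: 'a assume w: "norm w = 1"
    have "L0 w \<le> K0" using Lp[of w] kup[of w] w unfolding p_def K0_def by simp
    moreover have "L0 (-w) \<le> K0" using Lp[of "-w"] kup[of "-w"] w unfolding p_def K0_def by simp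
    moreover have "L0 (-w) = - L0 w" using Lsc[of "-1" w] by simp
    ultimately show "\<bar>L0 w\<bar> \<le> K0" by linarith
  qed
  have Lbound: "\<And>z. norm (L0 z) \<le> norm z * K0"
  proof -
    fix z :: 'a
    show "norm (L0 z) \<le> norm z * K0"
    proof (cases "z = 0")
      case True thus ?thesis using Lsc[of 0 0] by simp
    next
      case False
      define w where "w = (1 / norm z) *\<^sub>R z"
      have nw: "norm w = 1" unfolding w_def using False by simp
      have "z = norm z *\<^sub>R w" unfolding w_def using False by simp
      hence "L0 z = norm z * L0 w" using Lsc by metis
      thus ?thesis using Lb1[OF nw] by (simp add: abs_mult mult_left_mono)
    qed
  qed
  have bl: "bounded_linear L0"
    by (rule bounded_linear_intro[of L0 K0]) (use Ladd Lsc Lbound in auto)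
  define Lb where "Lb = Blinfun L0"
  have Lb_apply: "blinfun_apply Lb = L0" unfolding Lb_def using bl by (rule bounded_linear_Blinfun_apply)
  have key: "\<And>y u. h y \<noteq> \<infinity> \<Longrightarrow> \<psi> u - L0 u \<le> hr y - L0 y - kr 0"
  proof -
    fix y u assume hy: "h y \<noteq> \<infinity>"
    have "L0 (y - u) \<le> kr (y - u) - kr 0" using Lp unfolding p_def .
    also have "kr (y - u) \<le> hr (y - u + u) - \<psi> u" using kle[of "y-u" u] hy by simp
    finally have "L0 (y - u) \<le> hr y - \<psi> u - kr 0" by simp
    moreover have "L0 y = L0 (y - u) + L0 u" using Ladd[of "y-u" u] by simp
    ultimately show "\<psi> u - L0 u \<le> hr y - L0 y - kr 0" by linarith
  qed
  define \<beta> where "\<beta> = Sup (range (\<lambda>u. \<psi> u - L0 u))"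
  have bdd: "bdd_above (range (\<lambda>u. \<psi> u - L0 u))"
    unfolding bdd_above_def using key[OF y1] by blast
  have i: "\<And>u. \<psi> u \<le> L0 u + \<beta>"
  proof -
    fix u have "\<psi> u - L0 u \<le> \<beta>" unfolding \<beta>_def using cSUP_upper[OF _ bdd] by simp
    thus "\<psi> u \<le> L0 u + \<beta>" by simp
  qed
  have ii: "\<And>y. ereal (L0 y + \<beta>) \<le> h y"
  proof -
    fix y show "ereal (L0 y + \<beta>) \<le> h y"
    proof (cases "h y = \<infinity>")
      case True thus ?thesis by simp
    next
      case False
      have "\<beta> \<le> hr y - L0 y - kr 0" unfolding \<beta>_def
        by (rule cSUP_least) (use key[OF False] in auto)
      hence "L0 y + \<beta> \<le> hr y" using k0 by simp
      thus ?thesis using fin[OF False] by simp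
    qed
  qed
  show ?thesis
    by (intro exI[of _ Lb] exI[of _ \<beta>]) (use i ii in \<open>auto simp: Lb_apply \<psi>_def\<close>)
qed





definition LSC :: "('a::metric_space \<Rightarrow> ereal) \<Rightarrow> bool" where
 "LSC h \<longleftrightarrow> (\<forall>z c. ereal c < h z \<longrightarrow> (\<exists>r>0. \<forall>u. dist u z < r \<longrightarrow> ereal c < h u))"

lemma ekeland:
  fixes k :: "'a::banach \<Rightarrow> ereal"
  assumes lsc: "LSC k" and ninf: "\<And>y. k y \<noteq> -\<infinity>" and y0: "k y0 \<noteq> \<infinity>" and lb: "\<And>y. k y0 - ereal \<delta> \<le> k y"
    and \<delta>: "\<delta> > 0" and lam: "lam > 0"
  shows "\<exists>z. dist z y0 \<le> lam \<and> k z \<noteq> \<infinity> \<and> (\<forall>y. k z - ereal ((\<delta>/lam) * dist y z) \<le> k y)"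
proof -
  define e where "e = \<delta>/lam"
  have e: "e > 0" unfolding e_def using \<delta> lam by simp
  define kr where "kr y = real_of_ereal (k y)" for y
  have y0fin: "k y0 = ereal (kr y0)" unfolding kr_def using y0 ninf[of y0] by (cases "k y0") auto
  have fin: "\<And>y. k y \<noteq> \<infinity> \<Longrightarrow> k y = ereal (kr y)"
  proof -
    fix y assume "k y \<noteq> \<infinity>"
    moreover have "k y \<noteq> -\<infinity>" using lb[of y] y0fin by auto
    ultimately show "k y = ereal (kr y)" unfolding kr_def by (cases "k y") auto
  qed
  have krlb: "\<And>y. k y \<noteq> \<infinity> \<Longrightarrow> kr y0 - \<delta> \<le> kr y"
  proof -
    fix y assume "k y \<noteq> \<infinity>"
    hence "ereal (kr y0 - \<delta>) \<le> ereal (kr y)" using lb[of y] y0fin fin[of y] by simp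
    thus "kr y0 - \<delta> \<le> kr y" by simp
  qed
  define S where "S z = {y. k y \<noteq> \<infinity> \<and> kr y + e * dist y z \<le> kr z}" for z
  have Srefl: "\<And>z. k z \<noteq> \<infinity> \<Longrightarrow> z \<in> S z" unfolding S_def by simp
  have Strans: "\<And>y z w. y \<in> S z \<Longrightarrow> z \<in> S w \<Longrightarrow> y \<in> S w"
  proof -
    fix y z w assume "y \<in> S z" "z \<in> S w"
    hence 1: "k y \<noteq> \<infinity>" "kr y + e * dist y z \<le> kr z" "kr z + e * dist z w \<le> kr w" unfolding S_def by auto
    have "e * dist y w \<le> e * (dist y z + dist z w)" using e dist_triangle[of y w z] by (intro mult_left_mono) auto
    thus "y \<in> S w" using 1 unfolding S_def by (simp add: algebra_simps)
  qed
  have Sfin: "\<And>y z. y \<in> S z \<Longrightarrow> k y \<noteq> \<infinity>" unfolding S_def by auto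
  define I where "I z = Inf (kr ` S z)" for z
  have Sbdd: "\<And>z. bdd_below (kr ` S z)" unfolding bdd_below_def using krlb Sfin by blast
  have Ile: "\<And>y z. y \<in> S z \<Longrightarrow> I z \<le> kr y" unfolding I_def using Sbdd by (simp add: cInf_lower)
  define nxt where "nxt n z = (SOME y. y \<in> S z \<and> kr y < I z + (1/2)^n)" for n :: nat and z
  have nxt: "\<And>n z. k z \<noteq> \<infinity> \<Longrightarrow> nxt n z \<in> S z \<and> kr (nxt n z) < I z + (1/2)^n"
  proof -
    fix n z assume "k z \<noteq> \<infinity>"
    hence ne: "kr ` S z \<noteq> {}" using Srefl by blast
    have "I z < I z + (1/2)^n" by simp
    then obtain r where "r \<in> kr ` S z" "r < I z + (1/2)^n" using cInf_lessD[OF ne] unfolding I_def by blast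
    hence "\<exists>y. y \<in> S z \<and> kr y < I z + (1/2)^n" by blast
    thus "nxt n z \<in> S z \<and> kr (nxt n z) < I z + (1/2)^n" unfolding nxt_def by (rule someI_ex)
  qed
  define zs where "zs = rec_nat y0 nxt"
  have zs0: "zs 0 = y0" and zsS: "\<And>n. zs (Suc n) = nxt n (zs n)" unfolding zs_def by simp_all
  have zsfin: "\<And>n. k (zs n) \<noteq> \<infinity>"
  proof -
    fix n show "k (zs n) \<noteq> \<infinity>"
      by (induction n) (use y0 zs0 zsS nxt Sfin in metis)+
  qed
  have zsstep: "\<And>n. zs (Suc n) \<in> S (zs n) \<and> kr (zs (Suc n)) < I (zs n) + (1/2)^n"
    using zsS nxt zsfin by metis
  have zsmono: "\<And>n m. n \<le> m \<Longrightarrow> zs m \<in> S (zs n)"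
  proof -
    fix n m :: nat assume "n \<le> m"
    thus "zs m \<in> S (zs n)"
    proof (induction m rule: dec_induct)
      case base thus ?case using Srefl zsfin by blast
    next
      case (step j) thus ?case using zsstep Strans by blast
    qed
  qed
  have small: "\<And>n y. y \<in> S (zs (Suc n)) \<Longrightarrow> e * dist y (zs (Suc n)) \<le> (1/2)^n"
  proof -
    fix n y assume y: "y \<in> S (zs (Suc n))"
    hence "y \<in> S (zs n)" using Strans zsstep by blast
    hence "I (zs n) \<le> kr y" by (rule Ile)
    moreover have "kr y + e * dist y (zs (Suc n)) \<le> kr (zs (Suc n))" using y unfolding S_def by simp
    ultimately show "e * dist y (zs (Suc n)) \<le> (1/2)^n" using zsstep[of n] by linarith
  qed
  have smalld: "\<And>n y. y \<in> S (zs (Suc n)) \<Longrightarrow> dist y (zs (Suc n)) \<le> (1/2)^n / e"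
    using small e by (simp add: field_simps mult.commute)
  have cau: "Cauchy zs"
  proof (rule metric_CauchyI)
    fix \<epsilon> :: real assume "\<epsilon> > 0"
    hence "\<epsilon> * e / 2 > 0" using e by simp
    then obtain N where N: "(1/2::real)^N < \<epsilon> * e / 2" using real_arch_pow_inv[of "\<epsilon> * e / 2" "1/2"] by auto
    show "\<exists>M. \<forall>m\<ge>M. \<forall>n\<ge>M. dist (zs m) (zs n) < \<epsilon>"
    proof (intro exI[of _ "Suc N"] allI impI)
      fix m n assume "m \<ge> Suc N" "n \<ge> Suc N"
      hence "dist (zs m) (zs (Suc N)) \<le> (1/2)^N / e" "dist (zs n) (zs (Suc N)) \<le> (1/2)^N / e"
        using smalld zsmono by blast+
      moreover have "dist (zs m) (zs n) \<le> dist (zs m) (zs (Suc N)) + dist (zs n) (zs (Suc N))"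
        using dist_triangle_le[of _ _ _ "dist _ _ + dist _ _"] by (metis dist_triangle_le order_refl)
      moreover have "2 * ((1/2)^N / e) < \<epsilon>" using N e by (simp add: field_simps)
      ultimately show "dist (zs m) (zs n) < \<epsilon>" by linarith
    qed
  qed
  then obtain z where lim: "zs \<longlonglongrightarrow> z" using Cauchy_convergent convergent_def by blast
  have zin: "\<And>n. z \<in> S (zs n)"
  proof -
    fix n
    define a where "a = kr (zs n) - e * dist z (zs n)"
    have "k z \<le> ereal a"
    proof (rule ccontr)
      assume "\<not> k z \<le> ereal a"
      hence "ereal a < k z" by simp
      then obtain b where b: "ereal a < ereal b" "ereal b < k z" using ereal_dense2 by blast
      obtain r where r: "r > 0" "\<And>u. dist u z < r \<Longrightarrow> ereal b < k u" using lsc b(2) unfolding LSC_def by blast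
      have ab: "a < b" using b(1) by simp
      define \<tau> where "\<tau> = min r ((b - a) / e)"
      have \<tau>: "\<tau> > 0" unfolding \<tau>_def using r ab e by simp
      obtain no where no: "\<And>j. j \<ge> no \<Longrightarrow> dist (zs j) z < \<tau>" using lim \<tau> unfolding lim_sequentially by blast
      define j where "j = max no n"
      have dj: "dist (zs j) z < \<tau>" using no unfolding j_def by simp
      have "zs j \<in> S (zs n)" using zsmono unfolding j_def by simp
      hence 1: "kr (zs j) + e * dist (zs j) (zs n) \<le> kr (zs n)" unfolding S_def by simp
      have "dist z (zs n) \<le> dist z (zs j) + dist (zs j) (zs n)" by (rule dist_triangle)
      hence "e * dist z (zs n) \<le> e * dist z (zs j) + e * dist (zs j) (zs n)" using e
        by (metis distrib_left mult_le_cancel_left_pos)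
      moreover have "e * dist z (zs j) < b - a"
      proof -
        have "dist z (zs j) < (b - a) / e" using dj unfolding \<tau>_def by (simp add: dist_commute)
        thus ?thesis using e by (simp add: pos_less_divide_eq mult.commute)
      qed
      ultimately have "kr (zs j) < b" using 1 e unfolding a_def by simp
      moreover have "ereal b < k (zs j)" using r(2) dj unfolding \<tau>_def by simp
      ultimately show False using fin[OF zsfin[of j]] by simp
    qed
    hence zf: "k z \<noteq> \<infinity>" by auto
    hence "kr z \<le> a" using \<open>k z \<le> ereal a\<close> fin[OF zf] by simp
    thus "z \<in> S (zs n)" unfolding S_def a_def using zf by simp
  qed
  have zfin: "k z \<noteq> \<infinity>" using zin[of 0] Sfin by blast
  have "kr z + e * dist z y0 \<le> kr y0" using zin[of 0] zs0 unfolding S_def by simp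
  moreover have "kr y0 - \<delta> \<le> kr z" using krlb[OF zfin] .
  ultimately have "e * dist z y0 \<le> \<delta>" by simp
  hence dz: "dist z y0 \<le> lam" unfolding e_def using \<delta> lam by (simp add: field_simps)
  have propz: "\<And>y. k z - ereal (e * dist y z) \<le> k y"
  proof -
    fix y show "k z - ereal (e * dist y z) \<le> k y"
    proof (cases "k y = \<infinity>")
      case True thus ?thesis by simp
    next
      case yf: False
      have "kr z - e * dist y z \<le> kr y"
      proof (rule ccontr)
        assume "\<not> ?thesis"
        hence "y \<in> S z" unfolding S_def using yf by simp
        hence yS: "\<And>n. y \<in> S (zs (Suc n))" using zin Strans by blast
        have "dist y z = 0"
        proof (rule ccontr)
          assume "dist y z \<noteq> 0"
          hence pos: "dist y z * e / 2 > 0" using e by simp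
          then obtain N where N: "(1/2::real)^N < dist y z * e / 2" using real_arch_pow_inv[OF pos, of "1/2"] by auto
          have "dist y (zs (Suc N)) \<le> (1/2)^N / e" "dist z (zs (Suc N)) \<le> (1/2)^N / e"
            using smalld yS zin by blast+
          moreover have "dist y z \<le> dist y (zs (Suc N)) + dist z (zs (Suc N))" using dist_triangle_le[of _ _ _ "dist _ _ + dist _ _"] by (metis dist_triangle_le order_refl)
          moreover have "2 * ((1/2)^N / e) < dist y z" using N e by (simp add: field_simps)
          ultimately show False by linarith
        qed
        hence "y = z" by simp
        thus False using \<open>\<not> kr z - e * dist y z \<le> kr y\<close> by simp
      qed
      thus ?thesis using fin[OF yf] fin[OF zfin] by simp
    qed
  qed
  show ?thesis using dz zfin propz unfolding e_def by blast
qed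



lemma ereal_fin: "x \<noteq> \<infinity> \<Longrightarrow> x \<noteq> -\<infinity> \<Longrightarrow> x = ereal (real_of_ereal x)"
  by (cases x) auto

lemma lsc_LSC: "lsc_fun f \<Longrightarrow> LSC f"
  unfolding LSC_def
proof (intro allI impI)
  fix z c assume "lsc_fun f" "ereal c < f z"
  hence "open (- {x. f x \<le> ereal c})" "z \<in> - {x. f x \<le> ereal c}" unfolding lsc_fun_def by auto
  then obtain r where "r > 0" "\<And>u. dist u z < r \<Longrightarrow> u \<in> - {x. f x \<le> ereal c}"
    unfolding open_dist by blast
  thus "\<exists>r>0. \<forall>u. dist u z < r \<longrightarrow> ereal c < f u" by (metis ComplD mem_Collect_eq not_le)
qed

lemma LSC_shift:
  fixes h :: "'a::real_normed_vector \<Rightarrow> ereal"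
  shows "LSC h \<Longrightarrow> LSC (\<lambda>u. h (u + x))"
  unfolding LSC_def
proof (intro allI impI)
  fix z c assume "\<forall>z c. ereal c < h z \<longrightarrow> (\<exists>r>0. \<forall>u. dist u z < r \<longrightarrow> ereal c < h u)" "ereal c < h (z + x)"
  then obtain r where "r > 0" "\<And>u. dist u (z+x) < r \<Longrightarrow> ereal c < h u" by blast
  thus "\<exists>r>0. \<forall>u. dist u z < r \<longrightarrow> ereal c < h (u + x)"
  proof (intro exI[of _ r] conjI allI impI)
    fix u assume "dist u z < r"
    moreover have "dist (u+x) (z+x) = dist u z" by (simp add: dist_norm)
    ultimately show "ereal c < h (u + x)" using \<open>\<And>u. dist u (z+x) < r \<Longrightarrow> ereal c < h u\<close> by simp
  qed (use \<open>r > 0\<close> in simp)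
qed

lemma ereal_minus_less: "ereal c < h - ereal l \<longleftrightarrow> ereal (c + l) < h"
  by (cases h) auto

lemma LSC_minus_lin:
  fixes L :: "'a::real_normed_vector \<Rightarrow>\<^sub>L real"
  assumes "LSC h" shows "LSC (\<lambda>u. h u - ereal (blinfun_apply L u))"
  unfolding LSC_def
proof (intro allI impI)
  fix z c assume "ereal c < h z - ereal (blinfun_apply L z)"
  hence 1: "ereal (c + blinfun_apply L z) < h z" by (simp add: ereal_minus_less)
  then obtain b where b: "ereal (c + blinfun_apply L z) < ereal b" "ereal b < h z" using ereal_dense2 by blast
  obtain r where r: "r > 0" "\<And>u. dist u z < r \<Longrightarrow> ereal b < h u" using assms b(2) unfolding LSC_def by blast
  define d where "d = b - c - blinfun_apply L z"
  have d: "d > 0" using b(1) unfolding d_def by simp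
  have nL: "norm L + 1 > 0" using norm_ge_zero[of L] by linarith
  define r2 where "r2 = d / (norm L + 1)"
  have r2: "r2 > 0" unfolding r2_def using d by (simp add: add_nonneg_pos)
  show "\<exists>r>0. \<forall>u. dist u z < r \<longrightarrow> ereal c < h u - ereal (blinfun_apply L u)"
  proof (intro exI[of _ "min r r2"] conjI allI impI)
    show "0 < min r r2" using r r2 by simp
  next
    fix u assume du: "dist u z < min r r2"
    have "blinfun_apply L u - blinfun_apply L z = blinfun_apply L (u - z)" by (simp add: blinfun.diff_right)
    also have "\<dots> \<le> norm L * norm (u - z)" using norm_blinfun[of L "u - z"] by simp
    also have "\<dots> \<le> (norm L + 1) * norm (u - z)" by (simp add: mult_right_mono)
    also have "\<dots> < (norm L + 1) * r2" using du nL by (intro mult_strict_left_mono) (auto simp: dist_norm)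
    also have "\<dots> = d" unfolding r2_def using nL by simp
    finally have "c + blinfun_apply L u < b" unfolding d_def by simp
    hence "ereal (c + blinfun_apply L u) < h u" using r(2)[of u] du by (meson ereal_less_eq(3) le_less_trans less_imp_le min_less_iff_conj order_less_le_trans)
    thus "ereal c < h u - ereal (blinfun_apply L u)" by (simp add: ereal_minus_less)
  qed
qed

lemma cvx_of_convex_fun: "convex_fun f \<Longrightarrow> proper_fun f \<Longrightarrow> cvx f"
  unfolding cvx_def
proof (intro conjI allI impI)
  assume cf: "convex_fun f" and pf: "proper_fun f"
  fix u show "f u \<noteq> -\<infinity>" using pf unfolding proper_fun_def by blast
next
  fix a b and t :: real assume cf: "convex_fun f" and pf: "proper_fun f" and t: "0 \<le> t" "t \<le> 1"
    and fa: "f a \<noteq> \<infinity>" and fb: "f b \<noteq> \<infinity>"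
  have "f a = ereal (real_of_ereal (f a))" "f b = ereal (real_of_ereal (f b))"
    using fa fb pf ereal_fin unfolding proper_fun_def by blast+
  moreover have "f (t *\<^sub>R a + (1 - t) *\<^sub>R b) \<le> ereal t * f a + ereal (1 - t) * f b"
    using cf t unfolding convex_fun_def by blast
  ultimately show "f (t *\<^sub>R a + (1 - t) *\<^sub>R b) \<le> ereal (t * real_of_ereal (f a) + (1 - t) * real_of_ereal (f b))"
    by (metis times_ereal.simps(1) plus_ereal.simps(1))
qed

lemma cvx_shift: "cvx h \<Longrightarrow> cvx (\<lambda>u. h (u + x))"
  unfolding cvx_def
proof (intro conjI allI impI)
  fix u assume "(\<forall>u. h u \<noteq> - \<infinity>) \<and> (\<forall>a b t. 0 \<le> t \<longrightarrow> t \<le> 1 \<longrightarrow> h a \<noteq> \<infinity> \<longrightarrow> h b \<noteq> \<infinity> \<longrightarrow>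
     h (t *\<^sub>R a + (1-t) *\<^sub>R b) \<le> ereal (t * real_of_ereal (h a) + (1-t) * real_of_ereal (h b)))" thus "h (u + x) \<noteq> -\<infinity>" by blast
next
  fix a b and t :: real assume H: "(\<forall>u. h u \<noteq> - \<infinity>) \<and> (\<forall>a b t. 0 \<le> t \<longrightarrow> t \<le> 1 \<longrightarrow> h a \<noteq> \<infinity> \<longrightarrow> h b \<noteq> \<infinity> \<longrightarrow>
     h (t *\<^sub>R a + (1-t) *\<^sub>R b) \<le> ereal (t * real_of_ereal (h a) + (1-t) * real_of_ereal (h b)))"
    and t: "0 \<le> t" "t \<le> 1" and "h (a + x) \<noteq> \<infinity>" "h (b + x) \<noteq> \<infinity>"
  hence "h (t *\<^sub>R (a+x) + (1-t) *\<^sub>R (b+x)) \<le> ereal (t * real_of_ereal (h (a+x)) + (1-t) * real_of_ereal (h (b+x)))"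
    by blast
  moreover have "t *\<^sub>R (a+x) + (1-t) *\<^sub>R (b+x) = t *\<^sub>R a + (1 - t) *\<^sub>R b + x" by (simp add: algebra_simps)
  ultimately show "h (t *\<^sub>R a + (1 - t) *\<^sub>R b + x) \<le> ereal (t * real_of_ereal (h (a + x)) + (1 - t) * real_of_ereal (h (b + x)))"
    by simp
qed

lemma cvx_minus_lin:
  fixes L :: "'a::real_normed_vector \<Rightarrow>\<^sub>L real"
  assumes cv: "cvx h" shows "cvx (\<lambda>u. h u - ereal (blinfun_apply L u))"
  unfolding cvx_def
proof (intro conjI allI impI)
  fix u show "h u - ereal (blinfun_apply L u) \<noteq> -\<infinity>" using cv unfolding cvx_def by (cases "h u") auto
next
  fix a b and t :: real assume t: "0 \<le> t" "t \<le> 1" and fa: "h a - ereal (blinfun_apply L a) \<noteq> \<infinity>"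
    and fb: "h b - ereal (blinfun_apply L b) \<noteq> \<infinity>"
  have ha: "h a \<noteq> \<infinity>" and hb: "h b \<noteq> \<infinity>" using fa fb by auto
  have ea: "h a = ereal (real_of_ereal (h a))" and eb: "h b = ereal (real_of_ereal (h b))"
    using cvx_fin[OF cv] ha hb by blast+
  have le: "h (t *\<^sub>R a + (1-t) *\<^sub>R b) \<le> ereal (t * real_of_ereal (h a) + (1-t) * real_of_ereal (h b))"
    using cvxD[OF cv t ha hb] .
  have lin: "blinfun_apply L (t *\<^sub>R a + (1-t) *\<^sub>R b) = t * blinfun_apply L a + (1-t) * blinfun_apply L b"
    by (simp add: blinfun.add_right blinfun.scaleR_right)
  have "h (t *\<^sub>R a + (1-t) *\<^sub>R b) - ereal (blinfun_apply L (t *\<^sub>R a + (1-t) *\<^sub>R b))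
     \<le> ereal (t * real_of_ereal (h a) + (1-t) * real_of_ereal (h b)) - ereal (t * blinfun_apply L a + (1-t) * blinfun_apply L b)"
    using le unfolding lin by (rule ereal_minus_mono) simp
  also have "\<dots> = ereal (t * real_of_ereal (h a - ereal (blinfun_apply L a)) + (1-t) * real_of_ereal (h b - ereal (blinfun_apply L b)))"
    by (subst ea, subst eb, simp add: algebra_simps)
  finally show "h (t *\<^sub>R a + (1-t) *\<^sub>R b) - ereal (blinfun_apply L (t *\<^sub>R a + (1-t) *\<^sub>R b))
     \<le> ereal (t * real_of_ereal (h a - ereal (blinfun_apply L a)) + (1-t) * real_of_ereal (h b - ereal (blinfun_apply L b)))" .
qed



lemma affine_minorant:
  fixes h :: "'a::real_normed_vector \<Rightarrow> ereal"
  assumes cv: "cvx h" and lsc: "LSC h" and y1: "h y1 \<noteq> \<infinity>"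
  shows "\<exists>a::'a \<Rightarrow>\<^sub>L real. \<exists>\<beta>. \<forall>u. ereal (blinfun_apply a u + \<beta>) \<le> h u"
proof -
  define hr where "hr u = real_of_ereal (h u)" for u
  have fin: "\<And>w. h w \<noteq> \<infinity> \<Longrightarrow> h w = ereal (hr w)" unfolding hr_def using cvx_fin[OF cv] by blast
  have "ereal (hr y1 - 1) < h y1" using fin[OF y1] by simp
  then obtain r where r: "r > 0" "\<And>u. dist u y1 < r \<Longrightarrow> ereal (hr y1 - 1) < h u"
    using lsc unfolding LSC_def by blast
  define \<rho> where "\<rho> = r / 2"
  have \<rho>: "\<rho> > 0" "\<rho> < r" unfolding \<rho>_def using r by auto
  have low: "\<And>u. ereal (hr y1 - 1 - (1/\<rho>) * norm (u - y1)) \<le> h u"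
  proof -
    fix u
    show "ereal (hr y1 - 1 - (1/\<rho>) * norm (u - y1)) \<le> h u"
    proof (cases "norm (u - y1) \<le> \<rho>")
      case True
      hence "ereal (hr y1 - 1) < h u" using r(2)[of u] \<rho> by (simp add: dist_norm)
      moreover have "hr y1 - 1 - (1/\<rho>) * norm (u - y1) \<le> hr y1 - 1" using \<rho> by simp
      ultimately show ?thesis by (meson ereal_less_eq(3) less_imp_le order_trans)
    next
      case False
      show ?thesis
      proof (cases "h u = \<infinity>")
        case True thus ?thesis by simp
      next
        case hu: False
        define d where "d = norm (u - y1)"
        have d: "d > \<rho>" using False unfolding d_def by simp
        define \<theta> where "\<theta> = \<rho> / d"
        have \<theta>: "0 < \<theta>" "\<theta> \<le> 1" unfolding \<theta>_def using d \<rho> by auto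
        define v where "v = \<theta> *\<^sub>R u + (1 - \<theta>) *\<^sub>R y1"
        have "v - y1 = \<theta> *\<^sub>R (u - y1)" unfolding v_def by (simp add: algebra_simps)
        hence "norm (v - y1) = \<theta> * d" unfolding d_def using \<theta> by simp
        also have "\<dots> = \<rho>" unfolding \<theta>_def using d \<rho> by simp
        finally have "dist v y1 < r" using \<rho> by (simp add: dist_norm)
        hence "ereal (hr y1 - 1) < h v" by (rule r(2))
        moreover have "h v \<le> ereal (\<theta> * hr u + (1 - \<theta>) * hr y1)"
          unfolding v_def hr_def using cvxD[OF cv _ _ hu y1] \<theta> by simp
        ultimately have "ereal (hr y1 - 1) < ereal (\<theta> * hr u + (1 - \<theta>) * hr y1)" by (rule less_le_trans)
        hence "hr y1 - 1 < \<theta> * hr u + (1 - \<theta>) * hr y1" by simp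
        hence "\<theta> * hr y1 - 1 < \<theta> * hr u" by (simp add: algebra_simps)
        hence "(\<theta> * hr y1 - 1) / \<theta> < hr u" using \<theta> by (simp add: pos_divide_less_eq mult.commute)
        moreover have "(\<theta> * hr y1 - 1) / \<theta> = hr y1 - (1/\<rho>) * d"
          unfolding \<theta>_def using d \<rho> by (simp add: field_simps)
        ultimately have "hr y1 - 1 - (1/\<rho>) * d \<le> hr u" by simp
        thus ?thesis using fin[OF hu] unfolding d_def by simp
      qed
    qed
  qed
  obtain L \<beta> where "\<forall>u. ereal (blinfun_apply L u + \<beta>) \<le> h u"
    using sandwich[OF cv y1, of "1/\<rho>" "hr y1 - 1" y1] low \<rho> by auto
  thus ?thesis by blast
qed

lemma brondsted_rockafellar:
  fixes h :: "'a::banach \<Rightarrow> ereal"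
  assumes cv: "cvx h" and lsc: "LSC h" and y0: "h y0 \<noteq> \<infinity>" and \<delta>: "\<delta> > 0" and lam: "lam > 0"
    and sub: "\<And>y. h y0 + ereal (blinfun_apply cs (y - y0)) - ereal \<delta> \<le> h y"
  shows "\<exists>z zs. h z \<noteq> \<infinity> \<and> (\<forall>y. h z + ereal (blinfun_apply zs (y - z)) \<le> h y) \<and>
           norm (z - y0) \<le> lam \<and> norm (zs - cs) \<le> \<delta> / lam"
proof -
  define hr where "hr u = real_of_ereal (h u)" for u
  have fin: "\<And>w. h w \<noteq> \<infinity> \<Longrightarrow> h w = ereal (hr w)" unfolding hr_def using cvx_fin[OF cv] by blast
  define k where "k u = h u - ereal (blinfun_apply cs u)" for u
  have kcv: "cvx k" unfolding k_def by (rule cvx_minus_lin[OF cv])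
  have klsc: "LSC k" unfolding k_def by (rule LSC_minus_lin[OF lsc])
  have kninf: "\<And>y. k y \<noteq> -\<infinity>" using kcv unfolding cvx_def by blast
  have kfin: "\<And>y. k y \<noteq> \<infinity> \<longleftrightarrow> h y \<noteq> \<infinity>"
  proof -
    fix y show "k y \<noteq> \<infinity> \<longleftrightarrow> h y \<noteq> \<infinity>" unfolding k_def by (cases "h y") auto
  qed
  have kval: "\<And>y. h y \<noteq> \<infinity> \<Longrightarrow> k y = ereal (hr y - blinfun_apply cs y)"
    unfolding k_def using fin by (metis ereal_minus(1))
  have klb: "\<And>y. k y0 - ereal \<delta> \<le> k y"
  proof -
    fix y show "k y0 - ereal \<delta> \<le> k y"
    proof (cases "h y = \<infinity>")
      case True thus ?thesis unfolding k_def by simp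
    next
      case False
      have "ereal (hr y0 + blinfun_apply cs (y - y0) - \<delta>) \<le> ereal (hr y)"
        using sub[of y] fin[OF y0] fin[OF False] by simp
      hence "hr y0 + blinfun_apply cs (y - y0) - \<delta> \<le> hr y" by simp
      thus ?thesis using kval[OF y0] kval[OF False] by (simp add: blinfun.diff_right)
    qed
  qed
  obtain z where z: "dist z y0 \<le> lam" "k z \<noteq> \<infinity>" "\<And>y. k z - ereal ((\<delta>/lam) * dist y z) \<le> k y"
    using ekeland[OF klsc kninf _ klb \<delta> lam] kfin y0 by blast
  have hz: "h z \<noteq> \<infinity>" using z(2) kfin by simp
  define kz where "kz = hr z - blinfun_apply cs z"
  have kz: "k z = ereal kz" unfolding kz_def using kval[OF hz] .
  define m where "m = \<delta> / lam"
  have m: "m \<ge> 0" unfolding m_def using \<delta> lam by simp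
  have low: "\<And>u. ereal (kz - m * norm (u - z)) \<le> k u"
    using z(3) kz unfolding m_def by (simp add: dist_norm)
  obtain L \<beta> where L1: "\<And>u. ereal (blinfun_apply L u + \<beta>) \<le> k u"
    and L2: "\<And>u. kz - m * norm (u - z) \<le> blinfun_apply L u + \<beta>"
    using sandwich[OF kcv z(2) m low] by blast
  have "blinfun_apply L z + \<beta> \<le> kz" using L1[of z] kz by simp
  moreover have "kz \<le> blinfun_apply L z + \<beta>" using L2[of z] by simp
  ultimately have Lz: "blinfun_apply L z + \<beta> = kz" by simp
  have Lw: "\<And>w. - m * norm w \<le> blinfun_apply L w"
  proof -
    fix w
    have "kz - m * norm (z + w - z) \<le> blinfun_apply L (z + w) + \<beta>" by (rule L2)
    thus "- m * norm w \<le> blinfun_apply L w" using Lz by (simp add: blinfun.add_right)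
  qed
  have nL: "norm L \<le> m"
  proof (rule norm_blinfun_bound[OF m])
    fix w
    have "- m * norm w \<le> blinfun_apply L w" by (rule Lw)
    moreover have "- m * norm (-w) \<le> blinfun_apply L (-w)" by (rule Lw)
    ultimately show "norm (blinfun_apply L w) \<le> m * norm w" by (simp add: blinfun.minus_right abs_le_iff)
  qed
  define zs where "zs = cs + L"
  have subz: "\<And>y. h z + ereal (blinfun_apply zs (y - z)) \<le> h y"
  proof -
    fix y show "h z + ereal (blinfun_apply zs (y - z)) \<le> h y"
    proof (cases "h y = \<infinity>")
      case True thus ?thesis by simp
    next
      case False
      have "ereal (blinfun_apply L y + \<beta>) \<le> ereal (hr y - blinfun_apply cs y)" using L1[of y] kval[OF False] by simp
      hence "blinfun_apply L y + \<beta> \<le> hr y - blinfun_apply cs y" by simp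
      hence "hr z + blinfun_apply zs (y - z) \<le> hr y" using Lz unfolding zs_def kz_def
        by (simp add: blinfun.diff_right blinfun.add_left algebra_simps)
      thus ?thesis using fin[OF hz] fin[OF False] by simp
    qed
  qed
  have "norm (zs - cs) \<le> \<delta> / lam" unfolding zs_def using nL unfolding m_def by simp
  moreover have "norm (z - y0) \<le> lam" using z(1) by (simp add: dist_norm)
  ultimately show ?thesis using hz subz by blast
qed



lemma claimC:
  fixes h :: "'a::banach \<Rightarrow> ereal"
  assumes cv: "cvx h" and lsc: "LSC h" and y1: "h y1 \<noteq> \<infinity>" and \<eta>: "\<eta> > 0"
  shows "\<exists>b bs. h b \<noteq> \<infinity> \<and> (\<forall>y. h b + ereal (blinfun_apply bs (y - b)) \<le> h y) \<and> blinfun_apply bs b \<le> \<eta>"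
proof -
  define hr where "hr u = real_of_ereal (h u)" for u
  have fin: "\<And>w. h w \<noteq> \<infinity> \<Longrightarrow> h w = ereal (hr w)" unfolding hr_def using cvx_fin[OF cv] by blast
  obtain a \<beta>0 where a: "\<And>u. ereal (blinfun_apply a u + \<beta>0) \<le> h u"
    using affine_minorant[OF cv lsc y1] by blast
  define \<mu> where "\<mu> = norm a + 1"
  have \<mu>: "\<mu> > 0" unfolding \<mu>_def using norm_ge_zero[of a] by linarith
  define \<Phi> where "\<Phi> = {hr u + \<mu> * norm u | u. h u \<noteq> \<infinity>}"
  have \<Phi>ne: "\<Phi> \<noteq> {}" unfolding \<Phi>_def using y1 by blast
  have \<Phi>low: "\<And>x. x \<in> \<Phi> \<Longrightarrow> \<beta>0 \<le> x"
  proof -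
    fix x assume "x \<in> \<Phi>"
    then obtain u where u: "h u \<noteq> \<infinity>" "x = hr u + \<mu> * norm u" unfolding \<Phi>_def by blast
    have "blinfun_apply a u + \<beta>0 \<le> hr u" using a[of u] fin[OF u(1)] by simp
    moreover have "- (norm a * norm u) \<le> blinfun_apply a u"
      using norm_blinfun[of a u] by (simp add: abs_le_iff)
    moreover have "norm a * norm u \<le> \<mu> * norm u" unfolding \<mu>_def by (simp add: mult_right_mono)
    ultimately show "\<beta>0 \<le> x" using u(2) by linarith
  qed
  have \<Phi>bdd: "bdd_below \<Phi>" unfolding bdd_below_def using \<Phi>low by blast
  define mf where "mf = Inf \<Phi>"
  define lam where "lam = \<eta> / (2 * \<mu>)"
  have lam: "lam > 0" unfolding lam_def using \<eta> \<mu> by simp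
  have \<mu>lam: "\<mu> * lam = \<eta> / 2" unfolding lam_def using \<mu> by simp
  define \<delta> where "\<delta> = min (\<eta>/4) (\<mu> * lam)"
  have \<delta>: "\<delta> > 0" "\<delta> \<le> \<eta>/4" "\<delta> \<le> \<mu> * lam" unfolding \<delta>_def using \<eta> \<mu> lam by auto
  have "mf < mf + \<delta>" using \<delta> by simp
  then obtain x0 where "x0 \<in> \<Phi>" "x0 < mf + \<delta>" using cInf_lessD[OF \<Phi>ne] unfolding mf_def by blast
  then obtain y0 where y0: "h y0 \<noteq> \<infinity>" "hr y0 + \<mu> * norm y0 < mf + \<delta>" unfolding \<Phi>_def by blast
  define c where "c = hr y0 + \<mu> * norm y0 - \<delta>"
  have low: "\<And>u. ereal (c - \<mu> * norm (u - 0)) \<le> h u"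
  proof -
    fix u show "ereal (c - \<mu> * norm (u - 0)) \<le> h u"
    proof (cases "h u = \<infinity>")
      case True thus ?thesis by simp
    next
      case False
      hence "hr u + \<mu> * norm u \<in> \<Phi>" unfolding \<Phi>_def by blast
      hence "mf \<le> hr u + \<mu> * norm u" unfolding mf_def using \<Phi>bdd by (rule cInf_lower)
      hence "c - \<mu> * norm (u - 0) \<le> hr u" unfolding c_def using y0(2) by simp
      thus ?thesis using fin[OF False] by simp
    qed
  qed
  obtain cs \<beta> where S1: "\<And>u. ereal (blinfun_apply cs u + \<beta>) \<le> h u"
    and S2: "\<And>u. c - \<mu> * norm (u - 0) \<le> blinfun_apply cs u + \<beta>"
    using sandwich[OF cv y1 _ low] \<mu> by force
  have S1r: "\<And>u. h u \<noteq> \<infinity> \<Longrightarrow> blinfun_apply cs u + \<beta> \<le> hr u"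
    using S1 fin by (metis ereal_less_eq(3))
  have csy0: "blinfun_apply cs y0 \<le> \<delta> - \<mu> * norm y0"
    using S1r[OF y0(1)] S2[of 0] unfolding c_def by simp
  have sub: "\<And>y. h y0 + ereal (blinfun_apply cs (y - y0)) - ereal \<delta> \<le> h y"
  proof -
    fix y show "h y0 + ereal (blinfun_apply cs (y - y0)) - ereal \<delta> \<le> h y"
    proof (cases "h y = \<infinity>")
      case True thus ?thesis by simp
    next
      case False
      have "hr y0 + blinfun_apply cs (y - y0) - \<delta> \<le> hr y"
        using S1r[OF False] S2[of y0] unfolding c_def by (simp add: blinfun.diff_right)
      thus ?thesis using fin[OF False] fin[OF y0(1)] by simp
    qed
  qed
  have cslow: "\<And>w. - \<mu> * norm w \<le> blinfun_apply cs w"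
  proof (rule ccontr)
    fix w assume "\<not> - \<mu> * norm w \<le> blinfun_apply cs w"
    hence g: "- \<mu> * norm w - blinfun_apply cs w > 0" by simp
    define g where "g = - \<mu> * norm w - blinfun_apply cs w"
    define C0 where "C0 = c - \<beta>"
    define s where "s = (\<bar>C0\<bar> + 1) / g"
    have s: "s > 0" unfolding s_def g_def using g by (simp add: add_pos_nonneg)
    have "c - \<mu> * norm (s *\<^sub>R w - 0) \<le> blinfun_apply cs (s *\<^sub>R w) + \<beta>" by (rule S2)
    hence "C0 - s * (\<mu> * norm w) \<le> s * blinfun_apply cs w" unfolding C0_def
      using s by (simp add: blinfun.scaleR_right algebra_simps)
    hence "C0 \<le> s * (\<mu> * norm w + blinfun_apply cs w)" by (simp add: algebra_simps)
    also have "\<dots> = - s * g" unfolding g_def by (simp add: algebra_simps)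
    also have "\<dots> = - (\<bar>C0\<bar> + 1)" unfolding s_def using g unfolding g_def by simp
    finally show False by linarith
  qed
  have ncs: "norm cs \<le> \<mu>"
  proof (rule norm_blinfun_bound)
    show "0 \<le> \<mu>" using \<mu> by simp
  next
    fix w
    have "- \<mu> * norm w \<le> blinfun_apply cs w" "- \<mu> * norm (-w) \<le> blinfun_apply cs (-w)" using cslow by blast+
    thus "norm (blinfun_apply cs w) \<le> \<mu> * norm w" by (simp add: blinfun.minus_right abs_le_iff)
  qed
  obtain z zs where z: "h z \<noteq> \<infinity>" "\<And>y. h z + ereal (blinfun_apply zs (y - z)) \<le> h y"
    "norm (z - y0) \<le> lam" "norm (zs - cs) \<le> \<delta> / lam"
    using brondsted_rockafellar[OF cv lsc y0(1) \<delta>(1) lam sub] by blast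
  have dl: "\<delta> / lam \<le> \<mu>" using \<delta>(3) lam by (simp add: pos_divide_le_eq mult.commute)
  have e1: "blinfun_apply zs z = blinfun_apply cs y0 + blinfun_apply cs (z - y0) + blinfun_apply (zs - cs) z"
    by (simp add: blinfun.diff_right blinfun.diff_left)
  have e2: "blinfun_apply cs (z - y0) \<le> \<mu> * lam"
  proof -
    have "blinfun_apply cs (z - y0) \<le> norm cs * norm (z - y0)" using norm_blinfun[of cs "z - y0"] by simp
    also have "\<dots> \<le> \<mu> * lam" using ncs z(3) \<mu> by (intro mult_mono) auto
    finally show ?thesis .
  qed
  have nz: "norm z \<le> norm y0 + lam"
    using norm_triangle_ineq[of "z - y0" y0] z(3) by simp
  have e3: "blinfun_apply (zs - cs) z \<le> \<mu> * norm y0 + \<delta>"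
  proof -
    have "blinfun_apply (zs - cs) z \<le> norm (zs - cs) * norm z" using norm_blinfun[of "zs - cs" z] by simp
    also have "\<dots> \<le> (\<delta> / lam) * (norm y0 + lam)" using z(4) nz \<delta>(1) lam by (intro mult_mono) auto
    also have "\<dots> = (\<delta> / lam) * norm y0 + \<delta>" using lam by (simp add: field_simps)
    also have "\<dots> \<le> \<mu> * norm y0 + \<delta>" using mult_right_mono[OF dl norm_ge_zero[of y0]] by simp
    finally show ?thesis .
  qed
  have "blinfun_apply zs z \<le> \<eta>" using e1 e2 e3 csy0 \<mu>lam \<delta>(2) by linarith
  thus ?thesis using z(1,2) by blast
qed



lemma fitz_ge_pair:
  fixes f :: "'a::banach \<Rightarrow> ereal"
  assumes lf: "lsc_fun f" and pf: "proper_fun f" and cf: "convex_fun f"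
  shows "ereal (pair x xs) \<le> fitzpatrick (subdiff f) (x, xs)"
proof -
  have cvf: "cvx f" using cvx_of_convex_fun[OF cf pf] .
  have lscf: "LSC f" using lsc_LSC[OF lf] .
  obtain y1 where y1: "f y1 \<noteq> \<infinity>" using pf unfolding proper_fun_def by blast
  have ninf: "\<And>u. f u \<noteq> -\<infinity>" using pf unfolding proper_fun_def by blast
  define h where "h u = f (u + x) - ereal (blinfun_apply xs u)" for u
  have hcv: "cvx h" unfolding h_def using cvx_minus_lin[OF cvx_shift[OF cvf]] .
  have hlsc: "LSC h" unfolding h_def using LSC_minus_lin[OF LSC_shift[OF lscf]] .
  have hy1: "h (y1 - x) \<noteq> \<infinity>" unfolding h_def using y1 by (cases "f y1") auto
  let ?A = "{(y, ys). ys \<in> subdiff f y}"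
  let ?g = "\<lambda>p. ereal (pair (fst p) xs + pair (x - fst p) (snd p))"
  have F: "fitzpatrick (subdiff f) (x, xs) = (SUP p\<in>?A. ?g p)" unfolding fitzpatrick_def by simp
  show ?thesis unfolding F
  proof (rule ereal_le_epsilon2)
    fix e :: real assume e: "e > 0"
    obtain b bs where b: "h b \<noteq> \<infinity>" "\<And>y. h b + ereal (blinfun_apply bs (y - b)) \<le> h y"
      "blinfun_apply bs b \<le> e"
      using claimC[OF hcv hlsc hy1 e] by blast
    define y where "y = b + x"
    define ys where "ys = bs + xs"
    have fy: "f y \<noteq> \<infinity>" using b(1) unfolding h_def y_def by (cases "f (b + x)") auto
    have fyr: "f y = ereal (real_of_ereal (f y))" using fy ninf ereal_fin by blast
    have sd: "ys \<in> subdiff f y" unfolding subdiff_def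
    proof (intro CollectI conjI allI)
      show "f y < \<infinity>" using fy by (simp add: less_top)
    next
      fix w show "f y + ereal (pair (w - y) ys) \<le> f w"
      proof (cases "f w = \<infinity>")
        case True thus ?thesis by simp
      next
        case False
        have fwr: "f w = ereal (real_of_ereal (f w))" using False ninf ereal_fin by blast
        have "h b + ereal (blinfun_apply bs (w - x - b)) \<le> h (w - x)" by (rule b(2))
        hence "ereal (real_of_ereal (f y) - blinfun_apply xs b + blinfun_apply bs (w - x - b))
            \<le> ereal (real_of_ereal (f w) - blinfun_apply xs (w - x))"
          unfolding h_def y_def using fyr fwr unfolding y_def by (metis ereal_minus(1) plus_ereal.simps(1) diff_add_cancel)
        hence "real_of_ereal (f y) - blinfun_apply xs b + blinfun_apply bs (w - x - b)
            \<le> real_of_ereal (f w) - blinfun_apply xs (w - x)" by simp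
        hence "real_of_ereal (f y) + pair (w - y) ys \<le> real_of_ereal (f w)"
          unfolding pair_def ys_def y_def by (simp add: blinfun.diff_right blinfun.add_left blinfun.add_right algebra_simps)
        thus ?thesis using fyr fwr by (metis ereal_less_eq(3) plus_ereal.simps(1))
      qed
    qed
    hence yA: "(y, ys) \<in> ?A" by simp
    have "pair x xs \<le> pair y xs + pair (x - y) ys + e"
      using b(3) unfolding pair_def ys_def y_def by (simp add: blinfun.diff_right blinfun.add_left blinfun.add_right blinfun.minus_right algebra_simps)
    hence "ereal (pair x xs) \<le> ?g (y, ys) + ereal e" by simp
    also have "?g (y, ys) \<le> (SUP p\<in>?A. ?g p)" using yA by (rule SUP_upper)
    hence "?g (y, ys) + ereal e \<le> (SUP p\<in>?A. ?g p) + ereal e" by (rule add_right_mono)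
    finally show "ereal (pair x xs) \<le> (SUP p\<in>?A. ?g p) + ereal e" .
  qed
qed

theorem proposition4p1:
  fixes f :: "'a::banach \<Rightarrow> ereal"
  assumes "reflexive_space TYPE('a)"
    and "lsc_fun f" and "proper_fun f" and "convex_fun f"
  shows "\<forall>\<epsilon> x. \<epsilon> \<ge> 0 \<longrightarrow>
           breve_T (fitzpatrick (subdiff f)) (\<epsilon> / 2) x \<subseteq> smallest_enl (subdiff f) \<epsilon> x"
proof (intro allI impI subsetI)
  fix \<epsilon> :: real and x :: 'a and xs assume "\<epsilon> \<ge> 0"
    and xs: "xs \<in> breve_T (fitzpatrick (subdiff f)) (\<epsilon> / 2) x"
  let ?g = "fitzpatrick (subdiff f)"
  have cond: "\<And>v. ?g (x, xs) + ereal (pair2 (v - (x, xs)) (xs, x)) - ereal \<epsilon> \<le> ?g v"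
    using xs unfolding breve_T_def eps_subdiff_def by (auto split: if_splits)
  have gx: "ereal (pair x xs) \<le> ?g (x, xs)" using fitz_ge_pair assms(2-4) by blast
  have "conj_pair ?g (xs, x) \<le> ereal (pair x xs + \<epsilon>)"
    unfolding conj_pair_def
  proof (simp only: prod.case, rule SUP_least)
    fix p :: "'a \<times> ('a \<Rightarrow>\<^sub>L real)" assume "p \<in> UNIV"
    obtain y ys where p: "p = (y, ys)" by (cases p)
    have "?g (x, xs) + ereal (pair2 (p - (x, xs)) (xs, x)) - ereal \<epsilon> \<le> ?g p" by (rule cond)
    hence "ereal (pair x xs) + ereal (pair2 (p - (x, xs)) (xs, x)) - ereal \<epsilon> \<le> ?g p"
      using gx by (meson add_right_mono ereal_minus_mono order_refl order_trans)
    hence le: "ereal (pair y xs + pair x ys - pair x xs - \<epsilon>) \<le> ?g p"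
      unfolding p pair2_def pair_def by (simp add: blinfun.diff_right blinfun.diff_left algebra_simps)
    show "ereal (pair (fst p) xs + pair x (snd p)) - ?g p \<le> ereal (pair x xs + \<epsilon>)"
    proof (cases "?g p")
      case (real r)
      thus ?thesis using le unfolding p by simp
    next
      case PInf thus ?thesis by simp
    next
      case MInf thus ?thesis using le by simp
    qed
  qed
  thus "xs \<in> smallest_enl (subdiff f) \<epsilon> x" unfolding smallest_enl_def by simp
qed



end
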